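(* Let $n>m\ge 1$ and $T\ge 1$ be integers, let $0<\gamma<1$, and let $x_0,x_1,x_2,\ldots\in[-1,1]^m$. Let $\sigma:\mathbb{R}\to[-1,1]$ be a nondecreasing differentiable function, applied componentwise to vectors, with $\sup_z \sigma'(z)\le 1$. Let $H\in\mathbb{R}^{m\times n}$ be the projection onto the first $m$ coordinates. Let $(F_i,G_i)_{i\ge 0}$ be a sequence with $F_i\in\mathbb{R}^{n\times n}$, $G_i\in\mathbb{R}^{n\times(m+1)}$, and suppose that $\|F_i\|_\infty\le 1/\sqrt{\gamma}$ for all $i$. For each $i$, let $(u_0,\dots,u_T)$ be given by $u_0=0$, $u_{t+1}=\sigma(F_iu_t+G_i[x_t;1])$ for $0\le t<T$. Define $s^{(0)}_t(u)=u$, $s^{(1)}_t(u)=\sigma(F_iu+G_i[x_t;1])$ and, for $k\ge 2$, $s^{(k)}_t(u)=\sigma\big(F_i s^{(k-1)}_t(u)+G_i[Hs^{(k-1)}_t(u);1]\big)$. For $1\le t\le T$ and $k\ge1$ put $e_{t,k}=Hs^{(k)}_t(u_t)-x_{t+k}\in\mathbb{R}^m$ and $$m(k)=\prod_{j=1}^{k}\operatorname{diag}\!\big(\sigma'(s^{(j-1)}_t(u_t))\big)F_i\in\mathbb{R}^{n\times n}$$ (ordered product). For $1\le a,b,c\le n$ and $1\le d\le m+1$ and $K\in\{1,2,\dots\}\cup\{\infty\}$ set $$D^{F,K}_{ab}(i)=\sum_{t=1}^T\sum_{k=1}^{K}\gamma^k\, e_{t,k}^\top H\,[m(k)]_a\,[u_t]_b,\qquad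 D^{G,K}_{cd}(i)=\sum_{t=1}^T\sum_{k=1}^{K}\gamma^k\, e_{t,k}^\top H\,[m(k)]_c\,\big[[x_{t+k};1]\big]_d .$$ Then the series $D^{F,\infty}_{ab}(i)$ and $D^{G,\infty}_{cd}(i)$ converge, and for every $\epsilon_0>0$ there exists $K$ such that for all $i$ and all indices $a,b,c,d$, $$|D^{F,\infty}_{ab}(i)-D^{F,K}_{ab}(i)|<\epsilon_0\quad\text{and}\quad |D^{G,\infty}_{cd}(i)-D^{G,K}_{cd}(i)|<\epsilon_0 .$$
   Context: This concerns a recurrent network $u_{t+1}=\sigma(Fu_t+G[x_t;1])$ with outputs $Hu_t$; $[x;1]\in\mathbb{R}^{m+1}$ denotes $x$ with a constant $1$ appended (bias component). $D^{F,\infty}$, $D^{G,\infty}$ are the paper's expressions for the gradient of the discounted multi-step prediction cost $\sum_{t}\sum_{k\ge1}\gamma^k\|e_{t,k}\|^2$ with respect to $F$ and $G$, evaluated at $(F_i,G_i)$, and $D^{F,K}$, $D^{G,K}$ are the corresponding truncations at lookahead $K$. $[v]_b$ denotes the $b$-th component of a vector $v$, $[M]_a$ the $a$-th column of a matrix $M$, and $\operatorname{diag}(v)$ the diagonal matrix with diagonal $v$. For a matrix $A$, $\|A\|_\infty$ is the operator norm induced by the maximum norm on vectors (maximum absolute row sum). *)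

theory Defs
  imports "HOL-Analysis.Analysis"
begin

text \<open>Vectors are functions nat => real (0-indexed, only the first p entries matter);
matrices are functions nat => nat => real (entry in row r, column j is A r j).\<close>

definition mv :: "nat \<Rightarrow> (nat \<Rightarrow> nat \<Rightarrow> real) \<Rightarrow> (nat \<Rightarrow> real) \<Rightarrow> nat \<Rightarrow> real" where
  "mv p A v = (\<lambda>r. \<Sum>j<p. A r j * v j)"

definition mm :: "nat \<Rightarrow> (nat \<Rightarrow> nat \<Rightarrow> real) \<Rightarrow> (nat \<Rightarrow> nat \<Rightarrow> real) \<Rightarrow> nat \<Rightarrow> nat \<Rightarrow> real" where
  "mm p A B = (\<lambda>r j. \<Sum>l<p. A r l * B l j)"

definition idm :: "nat \<Rightarrow> nat \<Rightarrow> real" where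
  "idm = (\<lambda>r j. if r = j then 1 else 0)"

definition diagm :: "(nat \<Rightarrow> real) \<Rightarrow> nat \<Rightarrow> nat \<Rightarrow> real" where
  "diagm v = (\<lambda>r j. if r = j then v r else 0)"

text \<open>Maximum absolute row sum of an n x n matrix (operator norm induced by the max norm).\<close>
definition inf_norm :: "nat \<Rightarrow> (nat \<Rightarrow> nat \<Rightarrow> real) \<Rightarrow> real" where
  "inf_norm p A = Max ((\<lambda>r. \<Sum>j<p. \<bar>A r j\<bar>) ` {..<p})"

definition aug :: "nat \<Rightarrow> (nat \<Rightarrow> real) \<Rightarrow> nat \<Rightarrow> real" where
  "aug m v = (\<lambda>d. if d < m then v d else 1)"

definition Hproj :: "nat \<Rightarrow> (nat \<Rightarrow> real) \<Rightarrow> nat \<Rightarrow> real" where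
  "Hproj m v = (\<lambda>j. if j < m then v j else 0)"

definition rnn_step :: "(real \<Rightarrow> real) \<Rightarrow> nat \<Rightarrow> nat \<Rightarrow> (nat \<Rightarrow> nat \<Rightarrow> real) \<Rightarrow> (nat \<Rightarrow> nat \<Rightarrow> real)
    \<Rightarrow> (nat \<Rightarrow> real) \<Rightarrow> (nat \<Rightarrow> real) \<Rightarrow> nat \<Rightarrow> real" where
  "rnn_step \<sigma> n m F G v w = (\<lambda>r. \<sigma> (mv n F v r + mv (m + 1) G (aug m w) r))"

fun traj :: "(real \<Rightarrow> real) \<Rightarrow> nat \<Rightarrow> nat \<Rightarrow> (nat \<Rightarrow> nat \<Rightarrow> real) \<Rightarrow> (nat \<Rightarrow> nat \<Rightarrow> real)
    \<Rightarrow> (nat \<Rightarrow> nat \<Rightarrow> real) \<Rightarrow> nat \<Rightarrow> nat \<Rightarrow> real" where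
  "traj \<sigma> n m F G x 0 = (\<lambda>_. 0)"
| "traj \<sigma> n m F G x (Suc t) = rnn_step \<sigma> n m F G (traj \<sigma> n m F G x t) (x t)"

fun spred :: "(real \<Rightarrow> real) \<Rightarrow> nat \<Rightarrow> nat \<Rightarrow> (nat \<Rightarrow> nat \<Rightarrow> real) \<Rightarrow> (nat \<Rightarrow> nat \<Rightarrow> real)
    \<Rightarrow> (nat \<Rightarrow> nat \<Rightarrow> real) \<Rightarrow> nat \<Rightarrow> nat \<Rightarrow> (nat \<Rightarrow> real) \<Rightarrow> nat \<Rightarrow> real" where
  "spred \<sigma> n m F G x t 0 u = u"
| "spred \<sigma> n m F G x t (Suc 0) u = rnn_step \<sigma> n m F G u (x t)"
| "spred \<sigma> n m F G x t (Suc (Suc k)) u =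
     rnn_step \<sigma> n m F G (spred \<sigma> n m F G x t (Suc k) u) (Hproj m (spred \<sigma> n m F G x t (Suc k) u))"

definition err :: "(real \<Rightarrow> real) \<Rightarrow> nat \<Rightarrow> nat \<Rightarrow> (nat \<Rightarrow> nat \<Rightarrow> real) \<Rightarrow> (nat \<Rightarrow> nat \<Rightarrow> real)
    \<Rightarrow> (nat \<Rightarrow> nat \<Rightarrow> real) \<Rightarrow> nat \<Rightarrow> nat \<Rightarrow> nat \<Rightarrow> real" where
  "err \<sigma> n m F G x t k = (\<lambda>j. Hproj m (spred \<sigma> n m F G x t k (traj \<sigma> n m F G x t)) j - x (t + k) j)"

fun mprod :: "(real \<Rightarrow> real) \<Rightarrow> (real \<Rightarrow> real) \<Rightarrow> nat \<Rightarrow> nat \<Rightarrow> (nat \<Rightarrow> nat \<Rightarrow> real) \<Rightarrow> (nat \<Rightarrow> nat \<Rightarrow> real)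
    \<Rightarrow> (nat \<Rightarrow> nat \<Rightarrow> real) \<Rightarrow> nat \<Rightarrow> nat \<Rightarrow> nat \<Rightarrow> nat \<Rightarrow> real" where
  "mprod \<sigma> \<sigma>' n m F G x t 0 = idm"
| "mprod \<sigma> \<sigma>' n m F G x t (Suc k) =
     mm n (mprod \<sigma> \<sigma>' n m F G x t k)
        (mm n (diagm (\<lambda>r. \<sigma>' (spred \<sigma> n m F G x t k (traj \<sigma> n m F G x t) r))) F)"

definition eHm :: "(real \<Rightarrow> real) \<Rightarrow> (real \<Rightarrow> real) \<Rightarrow> nat \<Rightarrow> nat \<Rightarrow> (nat \<Rightarrow> nat \<Rightarrow> real) \<Rightarrow> (nat \<Rightarrow> nat \<Rightarrow> real)
    \<Rightarrow> (nat \<Rightarrow> nat \<Rightarrow> real) \<Rightarrow> nat \<Rightarrow> nat \<Rightarrow> nat \<Rightarrow> real" where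
  "eHm \<sigma> \<sigma>' n m F G x t k a =
     (\<Sum>j<m. err \<sigma> n m F G x t k j * mprod \<sigma> \<sigma>' n m F G x t k j a)"

definition termF :: "(real \<Rightarrow> real) \<Rightarrow> (real \<Rightarrow> real) \<Rightarrow> nat \<Rightarrow> nat \<Rightarrow> (nat \<Rightarrow> nat \<Rightarrow> real) \<Rightarrow> (nat \<Rightarrow> nat \<Rightarrow> real)
    \<Rightarrow> (nat \<Rightarrow> nat \<Rightarrow> real) \<Rightarrow> real \<Rightarrow> nat \<Rightarrow> nat \<Rightarrow> nat \<Rightarrow> nat \<Rightarrow> real" where
  "termF \<sigma> \<sigma>' n m F G x \<gamma> t k a b =
     \<gamma> ^ k * eHm \<sigma> \<sigma>' n m F G x t k a * traj \<sigma> n m F G x t b"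

definition termG :: "(real \<Rightarrow> real) \<Rightarrow> (real \<Rightarrow> real) \<Rightarrow> nat \<Rightarrow> nat \<Rightarrow> (nat \<Rightarrow> nat \<Rightarrow> real) \<Rightarrow> (nat \<Rightarrow> nat \<Rightarrow> real)
    \<Rightarrow> (nat \<Rightarrow> nat \<Rightarrow> real) \<Rightarrow> real \<Rightarrow> nat \<Rightarrow> nat \<Rightarrow> nat \<Rightarrow> nat \<Rightarrow> real" where
  "termG \<sigma> \<sigma>' n m F G x \<gamma> t k c d =
     \<gamma> ^ k * eHm \<sigma> \<sigma>' n m F G x t k c * aug m (x (t + k)) d"

definition DF_K where
  "DF_K \<sigma> \<sigma>' n m F G x \<gamma> T K a b = (\<Sum>t=1..T. \<Sum>k=1..K. termF \<sigma> \<sigma>' n m F G x \<gamma> t k a b)"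
definition DG_K where
  "DG_K \<sigma> \<sigma>' n m F G x \<gamma> T K c d = (\<Sum>t=1..T. \<Sum>k=1..K. termG \<sigma> \<sigma>' n m F G x \<gamma> t k c d)"
definition DF_inf where
  "DF_inf \<sigma> \<sigma>' n m F G x \<gamma> T a b = (\<Sum>t=1..T. \<Sum>k. termF \<sigma> \<sigma>' n m F G x \<gamma> t (Suc k) a b)"
definition DG_inf where
  "DG_inf \<sigma> \<sigma>' n m F G x \<gamma> T c d = (\<Sum>t=1..T. \<Sum>k. termG \<sigma> \<sigma>' n m F G x \<gamma> t (Suc k) c d)"

end

theory Submission
  imports Defs
begin

definition rs :: "nat \<Rightarrow> (nat \<Rightarrow> nat \<Rightarrow> real) \<Rightarrow> nat \<Rightarrow> real" where
  "rs n M r = (\<Sum>j<n. \<bar>M r j\<bar>)"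

lemma rs_mm:
  assumes "\<forall>l<n. rs n B l \<le> c" "0 \<le> c"
  shows "rs n (mm n M B) r \<le> rs n M r * c"
proof -
  have "rs n (mm n M B) r = (\<Sum>j<n. \<bar>\<Sum>l<n. M r l * B l j\<bar>)" by (simp add: rs_def mm_def)
  also have "\<dots> \<le> (\<Sum>j<n. \<Sum>l<n. \<bar>M r l\<bar> * \<bar>B l j\<bar>)"
  proof (rule sum_mono)
    fix j
    have "\<bar>\<Sum>l<n. M r l * B l j\<bar> \<le> (\<Sum>l<n. \<bar>M r l * B l j\<bar>)" by (rule sum_abs)
    then show "\<bar>\<Sum>l<n. M r l * B l j\<bar> \<le> (\<Sum>l<n. \<bar>M r l\<bar> * \<bar>B l j\<bar>)" by (simp only: abs_mult)
  qed
  also have "\<dots> = (\<Sum>l<n. \<Sum>j<n. \<bar>M r l\<bar> * \<bar>B l j\<bar>)" by (rule sum.swap)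
  also have "\<dots> = (\<Sum>l<n. \<bar>M r l\<bar> * rs n B l)"
    by (simp only: rs_def sum_distrib_left)
  also have "\<dots> \<le> (\<Sum>l<n. \<bar>M r l\<bar> * c)"
    using assms by (intro sum_mono mult_left_mono) auto
  also have "\<dots> = rs n M r * c" by (simp add: rs_def sum_distrib_right)
  finally show ?thesis .
qed

lemma rs_diag:
  assumes "l < n" "\<bar>s l\<bar> \<le> 1" "inf_norm n F \<le> c"
  shows "rs n (mm n (diagm s) F) l \<le> c"
proof -
  have e: "mm n (diagm s) F l j = s l * F l j" for j
  proof -
    have "mm n (diagm s) F l j = (\<Sum>la<n. if la = l then s l * F l j else 0)"
      unfolding mm_def diagm_def by (intro sum.cong) auto
    then show ?thesis using assms(1) by simp
  qed
  have "rs n (mm n (diagm s) F) l = \<bar>s l\<bar> * rs n F l"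
    by (simp add: rs_def e abs_mult sum_distrib_left)
  also have "\<dots> \<le> rs n F l"
    using assms(2) by (simp add: mult_left_le_one_le rs_def sum_nonneg)
  also have "\<dots> \<le> inf_norm n F"
    unfolding inf_norm_def rs_def using assms(1) by (intro Max_ge) auto
  finally show ?thesis using assms(3) by simp
qed

lemma rs_idm: "rs n idm r \<le> 1"
  by (simp add: rs_def idm_def if_distrib sum.delta cong: if_cong)

lemma rs_mprod:
  assumes "\<forall>z. \<bar>\<sigma>' z\<bar> \<le> 1" "inf_norm n F \<le> c" "1 \<le> c"
  shows "rs n (mprod \<sigma> \<sigma>' n m F G x t k) r \<le> c ^ k"
proof (induction k arbitrary: r)
  case 0 then show ?case using rs_idm by simp
next
  case (Suc k)
  have "rs n (mprod \<sigma> \<sigma>' n m F G x t (Suc k)) r \<le> rs n (mprod \<sigma> \<sigma>' n m F G x t k) r * c"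
    using assms by (simp, intro rs_mm) (auto intro!: rs_diag)
  also have "\<dots> \<le> c ^ k * c" using Suc assms by (intro mult_right_mono) auto
  finally show ?case by (simp add: mult.commute)
qed

lemma mprod_entry:
  assumes "\<forall>z. \<bar>\<sigma>' z\<bar> \<le> 1" "inf_norm n F \<le> c" "1 \<le> c" "a < n"
  shows "\<bar>mprod \<sigma> \<sigma>' n m F G x t k j a\<bar> \<le> c ^ k"
proof -
  have "\<bar>mprod \<sigma> \<sigma>' n m F G x t k j a\<bar> \<le> rs n (mprod \<sigma> \<sigma>' n m F G x t k) j"
    unfolding rs_def using assms(4) by (intro member_le_sum) auto
  then show ?thesis using rs_mprod[OF assms(1-3)] order_trans by blast
qed

lemma traj_bound:
  assumes "\<forall>z. -1 \<le> \<sigma> z \<and> \<sigma> z \<le> 1"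
  shows "\<bar>traj \<sigma> n m F G x t b\<bar> \<le> 1"
  using assms by (cases t) (auto simp: rnn_step_def abs_le_iff)

lemma spred_bound:
  assumes "\<forall>z. -1 \<le> \<sigma> z \<and> \<sigma> z \<le> 1" "1 \<le> k"
  shows "\<bar>spred \<sigma> n m F G x t k u j\<bar> \<le> 1"
proof -
  obtain k' where k: "k = Suc k'" using assms(2) by (cases k) auto
  show ?thesis using assms(1) unfolding k by (cases k') (auto simp: rnn_step_def abs_le_iff)
qed

lemma err_bound:
  assumes "\<forall>z. -1 \<le> \<sigma> z \<and> \<sigma> z \<le> 1" "1 \<le> k" "j < m" "\<forall>t j. j < m \<longrightarrow> \<bar>x t j\<bar> \<le> 1"
  shows "\<bar>err \<sigma> n m F G x t k j\<bar> \<le> 2"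
proof -
  have "\<bar>spred \<sigma> n m F G x t k (traj \<sigma> n m F G x t) j\<bar> \<le> 1" using spred_bound[OF assms(1,2)] .
  moreover have "\<bar>x (t + k) j\<bar> \<le> 1" using assms by auto
  ultimately show ?thesis using assms(3) by (simp add: err_def Hproj_def)
qed

lemma eHm_bound:
  assumes "\<forall>z. -1 \<le> \<sigma> z \<and> \<sigma> z \<le> 1" "1 \<le> k" "\<forall>t j. j < m \<longrightarrow> \<bar>x t j\<bar> \<le> 1"
    "\<forall>z. \<bar>\<sigma>' z\<bar> \<le> 1" "inf_norm n F \<le> c" "1 \<le> c" "a < n"
  shows "\<bar>eHm \<sigma> \<sigma>' n m F G x t k a\<bar> \<le> 2 * m * c ^ k"
proof -
  have "\<bar>eHm \<sigma> \<sigma>' n m F G x t k a\<bar> \<le> (\<Sum>j<m. \<bar>err \<sigma> n m F G x t k j\<bar> * \<bar>mprod \<sigma> \<sigma>' n m F G x t k j a\<bar>)"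
    unfolding eHm_def by (rule order_trans[OF sum_abs]) (simp add: abs_mult)
  also have "\<dots> \<le> (\<Sum>j<m. 2 * c ^ k)"
    using err_bound[OF assms(1,2) _ assms(3)] mprod_entry[OF assms(4-7)]
    by (intro sum_mono mult_mono) auto
  finally show ?thesis by simp
qed

lemma tail_summable:
  fixes f :: "nat \<Rightarrow> real"
  assumes "\<forall>k\<ge>1. \<bar>f k\<bar> \<le> B * q ^ k" "0 \<le> q" "q < 1"
  shows "summable (\<lambda>k. f (Suc k))"
proof (rule summable_comparison_test)
  show "\<exists>N. \<forall>k\<ge>N. norm (f (Suc k)) \<le> B * q ^ Suc k"
  proof (intro exI allI impI)
    fix k :: nat
    show "norm (f (Suc k)) \<le> B * q ^ Suc k" using spec[OF assms(1), of "Suc k"] by simp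
  qed
  show "summable (\<lambda>k. B * q ^ Suc k)"
    using assms(2,3) by (intro summable_mult summable_mult2 summable_geometric) auto
qed

lemma tail_bound:
  fixes f :: "nat \<Rightarrow> real"
  assumes "\<forall>k\<ge>1. \<bar>f k\<bar> \<le> B * q ^ k" "0 \<le> q" "q < 1"
  shows "\<bar>(\<Sum>k. f (Suc k)) - (\<Sum>k=1..K. f k)\<bar> \<le> B * q ^ Suc K / (1 - q)"
proof -
  have sm: "summable (\<lambda>k. f (Suc k))" by (rule tail_summable[OF assms])
  have "(\<Sum>k. f (Suc k)) = (\<Sum>j. f (Suc (j + K))) + (\<Sum>i<K. f (Suc i))"
    using suminf_split_initial_segment[OF sm, of K] by simp
  moreover have "(\<Sum>k=1..K. f k) = (\<Sum>i<K. f (Suc i))"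
    using sum.atLeast1_atMost_eq[of f K] by simp
  ultimately have eq: "(\<Sum>k. f (Suc k)) - (\<Sum>k=1..K. f k) = (\<Sum>j. f (Suc (j + K)))" by simp
  have gs: "summable (\<lambda>j. B * q ^ Suc K * q ^ j)"
    using assms(2,3) by (intro summable_mult summable_geometric) auto
  have "norm (\<Sum>j. f (Suc (j + K))) \<le> (\<Sum>j. B * q ^ Suc K * q ^ j)"
  proof (rule norm_suminf_le[OF _ gs])
    fix j
    have "\<bar>f (Suc (j + K))\<bar> \<le> B * q ^ Suc (j + K)" using assms(1) by auto
    also have "\<dots> = B * q ^ Suc K * q ^ j" by (simp add: power_add mult_ac)
    finally show "norm (f (Suc (j + K))) \<le> B * q ^ Suc K * q ^ j" by simp
  qed
  also have "(\<Sum>j. B * q ^ Suc K * q ^ j) = B * q ^ Suc K * (1 / (1 - q))"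
    using assms(2,3) by (subst suminf_mult) (auto simp: suminf_geometric)
  finally show ?thesis using eq by simp
qed

lemma termF_bound:
  assumes "\<forall>z. -1 \<le> \<sigma> z \<and> \<sigma> z \<le> 1" "1 \<le> k" "\<forall>t j. j < m \<longrightarrow> \<bar>x t j\<bar> \<le> 1"
    "\<forall>z. \<bar>\<sigma>' z\<bar> \<le> 1" "inf_norm n F \<le> 1 / sqrt \<gamma>" "0 < \<gamma>" "\<gamma> < 1" "a < n"
  shows "\<bar>termF \<sigma> \<sigma>' n m F G x \<gamma> t k a b\<bar> \<le> 2 * real m * sqrt \<gamma> ^ k"
    and "\<bar>termG \<sigma> \<sigma>' n m F G x \<gamma> t k a d\<bar> \<le> 2 * real m * sqrt \<gamma> ^ k"
proof -
  have c1: "1 \<le> 1 / sqrt \<gamma>" proof -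
    have "sqrt \<gamma> < 1" "0 < sqrt \<gamma>" using assms(6,7) by simp_all
    then show ?thesis by (simp add: le_divide_eq)
  qed
  have E: "\<bar>eHm \<sigma> \<sigma>' n m F G x t k a\<bar> \<le> 2 * real m * (1 / sqrt \<gamma>) ^ k"
    by (rule eHm_bound[OF assms(1-5) c1 assms(8)])
  have gc: "\<gamma> ^ k * (1 / sqrt \<gamma>) ^ k = sqrt \<gamma> ^ k"
  proof -
    have "\<gamma> * (1 / sqrt \<gamma>) = \<gamma> / sqrt \<gamma>" by simp
    also have "\<dots> = sqrt \<gamma>" using assms(6) by (intro real_div_sqrt) simp
    finally have "\<gamma> * (1 / sqrt \<gamma>) = sqrt \<gamma>" .
    then show ?thesis by (simp only: power_mult_distrib[symmetric])
  qed
  have T: "\<bar>traj \<sigma> n m F G x t b\<bar> \<le> 1" by (rule traj_bound[OF assms(1)])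
  have A: "\<bar>aug m (x (t + k)) d\<bar> \<le> 1" using assms(3) by (simp add: aug_def)
  have "\<bar>\<gamma> ^ k * eHm \<sigma> \<sigma>' n m F G x t k a\<bar> \<le> \<gamma> ^ k * (2 * real m * (1 / sqrt \<gamma>) ^ k)"
    using E assms(6) by (simp add: abs_mult)
  also have "\<dots> = 2 * real m * sqrt \<gamma> ^ k" using gc by (simp add: mult_ac)
  finally have M: "\<bar>\<gamma> ^ k * eHm \<sigma> \<sigma>' n m F G x t k a\<bar> \<le> 2 * real m * sqrt \<gamma> ^ k" .
  have "\<bar>termF \<sigma> \<sigma>' n m F G x \<gamma> t k a b\<bar> = \<bar>\<gamma> ^ k * eHm \<sigma> \<sigma>' n m F G x t k a\<bar> * \<bar>traj \<sigma> n m F G x t b\<bar>"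
    unfolding termF_def by (rule abs_mult)
  also have "\<dots> \<le> (2 * real m * sqrt \<gamma> ^ k) * 1"
    by (rule mult_mono[OF M T]) (simp_all add: assms(6) less_imp_le)
  finally show "\<bar>termF \<sigma> \<sigma>' n m F G x \<gamma> t k a b\<bar> \<le> 2 * real m * sqrt \<gamma> ^ k" by simp
  have "\<bar>termG \<sigma> \<sigma>' n m F G x \<gamma> t k a d\<bar> = \<bar>\<gamma> ^ k * eHm \<sigma> \<sigma>' n m F G x t k a\<bar> * \<bar>aug m (x (t + k)) d\<bar>"
    unfolding termG_def by (rule abs_mult)
  also have "\<dots> \<le> (2 * real m * sqrt \<gamma> ^ k) * 1"
    by (rule mult_mono[OF M A]) (simp_all add: assms(6) less_imp_le)
  finally show "\<bar>termG \<sigma> \<sigma>' n m F G x \<gamma> t k a d\<bar> \<le> 2 * real m * sqrt \<gamma> ^ k" by simp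
qed

lemma sum_tail_bound:
  fixes g :: "nat \<Rightarrow> nat \<Rightarrow> real"
  assumes "\<forall>t k. 1 \<le> k \<longrightarrow> \<bar>g t k\<bar> \<le> B * q ^ k" "0 \<le> q" "q < 1"
  shows "\<bar>(\<Sum>t=1..T. \<Sum>k. g t (Suc k)) - (\<Sum>t=1..T. \<Sum>k=1..K. g t k)\<bar> \<le> real T * (B * q ^ Suc K / (1 - q))"
proof -
  have "\<bar>(\<Sum>t=1..T. \<Sum>k. g t (Suc k)) - (\<Sum>t=1..T. \<Sum>k=1..K. g t k)\<bar>
      = \<bar>\<Sum>t=1..T. ((\<Sum>k. g t (Suc k)) - (\<Sum>k=1..K. g t k))\<bar>" by (simp add: sum_subtractf)
  also have "\<dots> \<le> (\<Sum>t=1..T. \<bar>(\<Sum>k. g t (Suc k)) - (\<Sum>k=1..K. g t k)\<bar>)" by (rule sum_abs)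
  also have "\<dots> \<le> (\<Sum>t=1..T. B * q ^ Suc K / (1 - q))"
  proof (rule sum_mono)
    fix t
    show "\<bar>(\<Sum>k. g t (Suc k)) - (\<Sum>k=1..K. g t k)\<bar> \<le> B * q ^ Suc K / (1 - q)"
      by (rule tail_bound) (use assms in auto)
  qed
  also have "\<dots> = real T * (B * q ^ Suc K / (1 - q))" by simp
  finally show ?thesis .
qed

theorem lemma1:
  fixes n m T :: nat and \<gamma> :: real and x :: "nat \<Rightarrow> nat \<Rightarrow> real"
    and \<sigma> \<sigma>' :: "real \<Rightarrow> real"
    and F :: "nat \<Rightarrow> nat \<Rightarrow> nat \<Rightarrow> real" and G :: "nat \<Rightarrow> nat \<Rightarrow> nat \<Rightarrow> real"
  assumes "1 \<le> m" and "m < n" and "1 \<le> T"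
    and "0 < \<gamma>" and "\<gamma> < 1"
    and "\<forall>t j. j < m \<longrightarrow> \<bar>x t j\<bar> \<le> 1"
    and "\<forall>z. -1 \<le> \<sigma> z \<and> \<sigma> z \<le> 1"
    and "mono \<sigma>"
    and "\<forall>z. (\<sigma> has_real_derivative \<sigma>' z) (at z)"
    and "\<forall>z. \<sigma>' z \<le> 1"
    and "\<forall>i. inf_norm n (F i) \<le> 1 / sqrt \<gamma>"
  shows "(\<forall>i t a b c d. 1 \<le> t \<and> t \<le> T \<and> a < n \<and> b < n \<and> c < n \<and> d < m + 1 \<longrightarrow>
            summable (\<lambda>k. termF \<sigma> \<sigma>' n m (F i) (G i) x \<gamma> t (Suc k) a b) \<and>
            summable (\<lambda>k. termG \<sigma> \<sigma>' n m (F i) (G i) x \<gamma> t (Suc k) c d))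
       \<and> (\<forall>\<epsilon>0 > 0. \<exists>K \<ge> 1. \<forall>i a b c d. a < n \<and> b < n \<and> c < n \<and> d < m + 1 \<longrightarrow>
            \<bar>DF_inf \<sigma> \<sigma>' n m (F i) (G i) x \<gamma> T a b - DF_K \<sigma> \<sigma>' n m (F i) (G i) x \<gamma> T K a b\<bar> < \<epsilon>0 \<and>
            \<bar>DG_inf \<sigma> \<sigma>' n m (F i) (G i) x \<gamma> T c d - DG_K \<sigma> \<sigma>' n m (F i) (G i) x \<gamma> T K c d\<bar> < \<epsilon>0)"
proof -
  have nn: "0 \<le> \<sigma>' z" for z
    using mono_on_imp_deriv_nonneg[of UNIV \<sigma> "\<sigma>' z" z] assms(8,9) by simp
  have s': "\<forall>z. \<bar>\<sigma>' z\<bar> \<le> 1" using nn assms(10) by (simp add: abs_le_iff)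
  define q where "q = sqrt \<gamma>"
  define B where "B = 2 * real m"
  have q0: "0 \<le> q" and q1: "q < 1" using assms(4,5) by (simp_all add: q_def)
  have B0: "0 < B" using assms(1) by (simp add: B_def)
  have bF: "\<forall>t k. 1 \<le> k \<longrightarrow> \<bar>termF \<sigma> \<sigma>' n m (F i) (G i) x \<gamma> t k a b\<bar> \<le> B * q ^ k" if "a < n" for i a b
    using termF_bound(1)[OF assms(7) _ assms(6) s' spec[OF assms(11), of i] assms(4,5) that]
    by (simp add: B_def q_def)
  have bG: "\<forall>t k. 1 \<le> k \<longrightarrow> \<bar>termG \<sigma> \<sigma>' n m (F i) (G i) x \<gamma> t k c d\<bar> \<le> B * q ^ k" if "c < n" for i c d
    using termF_bound(2)[OF assms(7) _ assms(6) s' spec[OF assms(11), of i] assms(4,5) that]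
    by (simp add: B_def q_def)
  have P1: "\<forall>i t a b c d. 1 \<le> t \<and> t \<le> T \<and> a < n \<and> b < n \<and> c < n \<and> d < m + 1 \<longrightarrow>
            summable (\<lambda>k. termF \<sigma> \<sigma>' n m (F i) (G i) x \<gamma> t (Suc k) a b) \<and>
            summable (\<lambda>k. termG \<sigma> \<sigma>' n m (F i) (G i) x \<gamma> t (Suc k) c d)"
  proof (intro allI impI conjI)
    fix i t a b c d
    assume h: "1 \<le> t \<and> t \<le> T \<and> a < n \<and> b < n \<and> c < n \<and> d < m + 1"
    show "summable (\<lambda>k. termF \<sigma> \<sigma>' n m (F i) (G i) x \<gamma> t (Suc k) a b)"
      by (rule tail_summable[where B=B, OF _ q0 q1]) (use bF h in auto)
    show "summable (\<lambda>k. termG \<sigma> \<sigma>' n m (F i) (G i) x \<gamma> t (Suc k) c d)"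
      by (rule tail_summable[where B=B, OF _ q0 q1]) (use bG h in auto)
  qed
  have P2: "\<exists>K \<ge> 1. \<forall>i a b c d. a < n \<and> b < n \<and> c < n \<and> d < m + 1 \<longrightarrow>
            \<bar>DF_inf \<sigma> \<sigma>' n m (F i) (G i) x \<gamma> T a b - DF_K \<sigma> \<sigma>' n m (F i) (G i) x \<gamma> T K a b\<bar> < \<epsilon>0 \<and>
            \<bar>DG_inf \<sigma> \<sigma>' n m (F i) (G i) x \<gamma> T c d - DG_K \<sigma> \<sigma>' n m (F i) (G i) x \<gamma> T K c d\<bar> < \<epsilon>0"
    if e: "\<epsilon>0 > 0" for \<epsilon>0
  proof -
    have T0: "0 < real T" using assms(3) by simp
    have "0 < \<epsilon>0 * (1 - q) / (B * real T)" using e q1 B0 T0 by simp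
    then obtain N where N: "q ^ N < \<epsilon>0 * (1 - q) / (B * real T)"
      using real_arch_pow_inv q1 by blast
    define K where "K = Suc N"
    have qK: "q ^ Suc K \<le> q ^ N" unfolding K_def using q0 q1 by (intro power_decreasing) auto
    have bd: "real T * (B * q ^ Suc K / (1 - q)) < \<epsilon>0"
    proof -
      have "real T * (B * q ^ Suc K / (1 - q)) \<le> real T * (B * q ^ N / (1 - q))"
        using qK q1 B0 T0 by (intro mult_left_mono divide_right_mono) auto
      also have "\<dots> = (B * real T) * q ^ N / (1 - q)" by simp
      also have "\<dots> < (B * real T) * (\<epsilon>0 * (1 - q) / (B * real T)) / (1 - q)"
        using N q1 B0 T0 by (intro divide_strict_right_mono mult_strict_left_mono) auto
      also have "\<dots> = \<epsilon>0" using q1 B0 T0 by simp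
      finally show ?thesis .
    qed
    show ?thesis
    proof (intro exI[of _ K] conjI allI impI)
      show "1 \<le> K" by (simp add: K_def)
      fix i a b c d
      assume h: "a < n \<and> b < n \<and> c < n \<and> d < m + 1"
      show "\<bar>DF_inf \<sigma> \<sigma>' n m (F i) (G i) x \<gamma> T a b - DF_K \<sigma> \<sigma>' n m (F i) (G i) x \<gamma> T K a b\<bar> < \<epsilon>0"
        unfolding DF_inf_def DF_K_def
        using sum_tail_bound[OF bF[of a i b] q0 q1, of T K] h bd by linarith
      show "\<bar>DG_inf \<sigma> \<sigma>' n m (F i) (G i) x \<gamma> T c d - DG_K \<sigma> \<sigma>' n m (F i) (G i) x \<gamma> T K c d\<bar> < \<epsilon>0"
        unfolding DG_inf_def DG_K_def
        using sum_tail_bound[OF bG[of c i d] q0 q1, of T K] h bd by linarith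
    qed
  qed
  show ?thesis using P1 P2 by blast
qed

end
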